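(* Let $\Lambda$ be an ordinal with $2\leq\Lambda\leq\omega$. For each $n\in\Lambda$ let $\delta_n$ be a nonempty family of nonempty subsets of $\omega$ with $\bigcap\delta_n=\varnothing$. Suppose that $\delta_0$ has the finite intersection property and that for each $n\in\Lambda\setminus\{0\}$ there is $\gamma_n\subseteq\mathcal{P}(\omega)$ with $|\gamma_n|\leq\omega$, $\gamma_n$ having the finite intersection property, and $\gamma_n\gg\delta_n$. Then there is a sequence $\langle\alpha_n\rangle_{n\in\Lambda}$ of strictly increasing functions $\alpha_n:\omega\to\omega$ such that: if $k\in\Lambda$ and $A_i\in\{\alpha_i[D]: D\in\delta_i\}$ for all $i\leq k$, then $\bigcap_{i\leq k}A_i$ is infinite.
   Context: Ordinals are von Neumann ordinals ($\Lambda=\{0,1,\dots\}$). A family has the finite intersection property if every finite nonempty subfamily has nonempty intersection. For families $\gamma,\delta$ of sets, $\gamma\gg\delta$ means: for every nonempty $D\in\delta$ there is a nonempty $G\in\gamma$ with $G\subseteq D$. $\alpha[D]$ denotes the image of $D$ under $\alpha$. *)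

theory Defs
  imports Main "HOL-Library.Extended_Nat" "HOL-Library.Countable_Set"
begin

definition fip :: "'a set set \<Rightarrow> bool" where
  "fip F \<longleftrightarrow> (\<forall>S. S \<subseteq> F \<and> finite S \<and> S \<noteq> {} \<longrightarrow> \<Inter>S \<noteq> {})"

definition refines :: "'a set set \<Rightarrow> 'a set set \<Rightarrow> bool" (infix "\<ggreater>" 50) where
  "\<gamma> \<ggreater> \<delta> \<longleftrightarrow> (\<forall>D\<in>\<delta>. D \<noteq> {} \<longrightarrow> (\<exists>G\<in>\<gamma>. G \<noteq> {} \<and> G \<subseteq> D))"

end

theory Submission
  imports Defs
begin

lemma fip_inf:
  fixes F :: "nat set set"
  assumes "fip F" "\<Inter>F = {}" "S \<subseteq> F" "finite S" "S \<noteq> {}"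
  shows "infinite (\<Inter>S)"
proof
  assume fin: "finite (\<Inter>S)"
  have "\<forall>x\<in>\<Inter>S. \<exists>E\<in>F. x \<notin> E" using assms(2) by blast
  then obtain E where E: "\<And>x. x \<in> \<Inter>S \<Longrightarrow> E x \<in> F \<and> x \<notin> E x" by metis
  define T where "T = S \<union> E ` (\<Inter>S)"
  have "T \<subseteq> F" using E assms(3) unfolding T_def by blast
  moreover have "finite T" using fin assms(4) unfolding T_def by simp
  moreover have "T \<noteq> {}" using assms(5) unfolding T_def by simp
  moreover have "\<Inter>T = {}" unfolding T_def using E by blast
  ultimately show False using assms(1) unfolding fip_def by blast
qed

lemma choose_seq:
  fixes H :: "nat \<Rightarrow> nat set"
  assumes "\<And>j. infinite (H j)"
  shows "\<exists>h. strict_mono h \<and> (\<forall>j. h j \<in> H j)"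
proof -
  define h where "h = rec_nat (LEAST x. x \<in> H 0) (\<lambda>j y. LEAST x. x \<in> H (Suc j) \<and> y < x)"
  have h0: "h 0 = (LEAST x. x \<in> H 0)" unfolding h_def by simp
  have hS: "h (Suc j) = (LEAST x. x \<in> H (Suc j) \<and> h j < x)" for j unfolding h_def by simp
  have ex: "\<exists>x. x \<in> H j \<and> y < x" for j y
    using assms[of j] unfolding infinite_nat_iff_unbounded by blast
  have a: "h 0 \<in> H 0" unfolding h0 using ex[of 0 0] by (metis (mono_tags, lifting) LeastI)
  have b: "h (Suc j) \<in> H (Suc j) \<and> h j < h (Suc j)" for j
    unfolding hS using ex[of "Suc j" "h j"] by (rule LeastI_ex)
  have "strict_mono h" using b by (simp add: strict_mono_Suc_iff)
  moreover have "h j \<in> H j" for j using a b by (cases j) auto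
  ultimately show ?thesis by blast
qed

lemma interp:
  fixes a b :: "nat \<Rightarrow> nat" and i :: nat
  assumes sa: "strict_mono a" and le: "\<And>j. i \<le> j \<Longrightarrow> a j \<le> b j"
    and dm: "\<And>j. i \<le> j \<Longrightarrow> b j - a j \<le> b (Suc j) - a (Suc j)"
  shows "strict_mono (\<lambda>x. x + Max (insert 0 ((\<lambda>j. b j - a j) ` {j. i \<le> j \<and> j \<le> x \<and> a j \<le> x})))"
    and "\<And>s. i \<le> s \<Longrightarrow> a s + Max (insert 0 ((\<lambda>j. b j - a j) ` {j. i \<le> j \<and> j \<le> a s \<and> a j \<le> a s})) = b s"
proof -
  show "strict_mono (\<lambda>x. x + Max (insert 0 ((\<lambda>j. b j - a j) ` {j. i \<le> j \<and> j \<le> x \<and> a j \<le> x})))"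
  proof (rule strict_monoI)
    fix x y :: nat assume "x < y"
    have "{j. i \<le> j \<and> j \<le> x \<and> a j \<le> x} \<subseteq> {j. i \<le> j \<and> j \<le> y \<and> a j \<le> y}"
      using \<open>x < y\<close> by auto
    moreover have "finite {j. i \<le> j \<and> j \<le> y \<and> a j \<le> y}"
      by (rule finite_subset[of _ "{..y}"]) auto
    ultimately have "Max (insert 0 ((\<lambda>j. b j - a j) ` {j. i \<le> j \<and> j \<le> x \<and> a j \<le> x}))
       \<le> Max (insert 0 ((\<lambda>j. b j - a j) ` {j. i \<le> j \<and> j \<le> y \<and> a j \<le> y}))"
      by (intro Max_mono) auto
    then show "x + Max (insert 0 ((\<lambda>j. b j - a j) ` {j. i \<le> j \<and> j \<le> x \<and> a j \<le> x}))
       < y + Max (insert 0 ((\<lambda>j. b j - a j) ` {j. i \<le> j \<and> j \<le> y \<and> a j \<le> y}))"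
      using \<open>x < y\<close> by linarith
  qed
  fix s assume "i \<le> s"
  have dmono: "b j - a j \<le> b s - a s" if "i \<le> j" "j \<le> s" for j
    using that(2)
  proof (induction rule: dec_induct)
    case base show ?case by simp
  next
    case (step n) then show ?case using dm[of n] \<open>i \<le> j\<close> by linarith
  qed
  have "{j. i \<le> j \<and> j \<le> a s \<and> a j \<le> a s} = {i..s}"
    using sa by (auto simp: strict_mono_less_eq seq_suble intro: le_trans[OF _ seq_suble[OF sa]])
  moreover have "Max (insert 0 ((\<lambda>j. b j - a j) ` {i..s})) = b s - a s"
    by (rule Max_eqI) (use dmono \<open>i \<le> s\<close> in auto)
  ultimately show "a s + Max (insert 0 ((\<lambda>j. b j - a j) ` {j. i \<le> j \<and> j \<le> a s \<and> a j \<le> a s})) = b s"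
    using le[OF \<open>i \<le> s\<close>] by simp
qed

theorem lemma13:
  fixes \<Lambda> :: enat and \<delta> :: "nat \<Rightarrow> nat set set"
  assumes "2 \<le> \<Lambda>"
    and "\<And>n. enat n < \<Lambda> \<Longrightarrow> \<delta> n \<noteq> {}"
    and "\<And>n D. enat n < \<Lambda> \<Longrightarrow> D \<in> \<delta> n \<Longrightarrow> D \<noteq> {}"
    and "\<And>n. enat n < \<Lambda> \<Longrightarrow> \<Inter>(\<delta> n) = {}"
    and "fip (\<delta> 0)"
    and "\<And>n. enat n < \<Lambda> \<Longrightarrow> n \<noteq> 0 \<Longrightarrow>
           \<exists>\<gamma> :: nat set set. countable \<gamma> \<and> fip \<gamma> \<and> \<gamma> \<ggreater> \<delta> n"
  shows "\<exists>\<alpha> :: nat \<Rightarrow> nat \<Rightarrow> nat.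
           (\<forall>n. enat n < \<Lambda> \<longrightarrow> strict_mono (\<alpha> n)) \<and>
           (\<forall>k A. enat k < \<Lambda> \<longrightarrow> (\<forall>i\<le>k. A i \<in> (\<lambda>D. \<alpha> i ` D) ` \<delta> i)
                   \<longrightarrow> infinite (\<Inter>i\<le>k. A i))"
proof -
  obtain \<gamma> where \<gamma>: "\<And>n. enat n < \<Lambda> \<Longrightarrow> n \<noteq> 0 \<Longrightarrow> countable (\<gamma> n) \<and> fip (\<gamma> n) \<and> \<gamma> n \<ggreater> \<delta> n"
    using assms(6) by metis
  define G where "G n t = from_nat_into (\<gamma> n) t" for n t
  define H where "H n j = (if enat n < \<Lambda> \<and> n \<noteq> 0 then \<Inter> (G n ` {..j}) else UNIV)" for n j
  have Hinf: "infinite (H n j)" for n j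
  proof (cases "enat n < \<Lambda> \<and> n \<noteq> 0")
    case True
    note g = \<gamma>[OF conjunct1[OF True] conjunct2[OF True]]
    obtain D where D: "D \<in> \<delta> n" using assms(2) True by blast
    have "D \<noteq> {}" using assms(3) True D by blast
    then have ne: "\<gamma> n \<noteq> {}" using g D unfolding refines_def by blast
    have emp: "\<Inter>(\<gamma> n) = {}"
    proof (rule ccontr)
      assume "\<Inter>(\<gamma> n) \<noteq> {}"
      then obtain p where p: "p \<in> \<Inter>(\<gamma> n)" by blast
      have "p \<in> \<Inter>(\<delta> n)"
      proof
        fix E assume "E \<in> \<delta> n"
        then have "E \<noteq> {}" using assms(3) True by blast
        then obtain G' where "G' \<in> \<gamma> n" "G' \<subseteq> E" using g \<open>E \<in> \<delta> n\<close> unfolding refines_def by blast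
        then show "p \<in> E" using p by blast
      qed
      then show False using assms(4) True by blast
    qed
    have "infinite (\<Inter> (G n ` {..j}))"
      by (rule fip_inf[OF conjunct1[OF conjunct2[OF g]] emp]) (auto simp: G_def from_nat_into ne)
    then show ?thesis using True unfolding H_def by simp
  next
    case False then have "H n j = UNIV" unfolding H_def by (rule if_not_P)
    then show ?thesis by simp
  qed
  have "\<forall>n. \<exists>h. strict_mono h \<and> (\<forall>j. h j \<in> H n j)"
  proof
    fix n show "\<exists>h. strict_mono h \<and> (\<forall>j. h j \<in> H n j)" by (rule choose_seq[OF Hinf])
  qed
  from choice[OF this] obtain hh where hh0: "\<forall>n. strict_mono (hh n) \<and> (\<forall>j. hh n j \<in> H n j)" by blast
  have hh: "\<And>n. strict_mono (hh n)" "\<And>n j. hh n j \<in> H n j" using hh0 by auto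
  define M where "M j = Max ((\<lambda>i. hh i j) ` {..j})" for j
  define v where "v j = (\<Sum>t\<le>j. M t + 1)" for j
  have vS: "v (Suc j) = v j + M (Suc j) + 1" for j unfolding v_def by simp
  have hM: "hh i j \<le> M j" if "i \<le> j" for i j unfolding M_def using that by (intro Max_ge) auto
  have vM: "M j + 1 \<le> v j" for j unfolding v_def
    using member_le_sum[of j "{..j}" "\<lambda>t. M t + 1"] by simp
  have vgt: "hh i j < v j" if "i \<le> j" for i j using hM[OF that] vM[of j] by linarith
  have vmono: "strict_mono v" by (simp add: strict_mono_Suc_iff vS)
  define \<alpha> where "\<alpha> n = (if n = 0 then v else (\<lambda>x. x + Max (insert 0 ((\<lambda>j. v j - hh n j) ` {j. n \<le> j \<and> j \<le> x \<and> hh n j \<le> x}))))" for n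
  have c1: "\<And>j. n \<le> j \<Longrightarrow> hh n j \<le> v j" for n using vgt by (simp add: less_imp_le)
  have c2: "\<And>j. n \<le> j \<Longrightarrow> v j - hh n j \<le> v (Suc j) - hh n (Suc j)" for n
  proof -
    fix j assume "n \<le> j"
    then have "hh n (Suc j) \<le> M (Suc j)" by (intro hM) simp
    then show "v j - hh n j \<le> v (Suc j) - hh n (Suc j)" unfolding vS by linarith
  qed
  have amono: "strict_mono (\<alpha> n)" for n
    using interp(1)[OF hh(1) c1 c2, of n] vmono by (simp add: \<alpha>_def)
  have aval: "\<alpha> n (hh n s) = v s" if "n \<noteq> 0" "n \<le> s" for n s
    using interp(2)[OF hh(1) c1 c2 that(2)] that(1) by (simp add: \<alpha>_def)
  show ?thesis
  proof (intro exI conjI allI impI)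
    fix n show "strict_mono (\<alpha> n)" by (rule amono)
  next
    fix k A assume k: "enat k < \<Lambda>" and A: "\<forall>i\<le>k. A i \<in> (\<lambda>D. \<alpha> i ` D) ` \<delta> i"
    have val: "enat i < \<Lambda>" if "i \<le> k" for i 
    proof -
      have "enat i \<le> enat k" using that by simp
      then show ?thesis using k by (rule le_less_trans)
    qed
    have "\<forall>i\<in>{..k}. \<exists>D. D \<in> \<delta> i \<and> A i = \<alpha> i ` D" using A by blast
    from bchoice[OF this] obtain D where D0: "\<forall>i\<in>{..k}. D i \<in> \<delta> i \<and> A i = \<alpha> i ` D i" by blast
    have D: "\<And>i. i \<le> k \<Longrightarrow> D i \<in> \<delta> i \<and> A i = \<alpha> i ` D i" using D0 by simp
    have "\<forall>i\<in>{1..k}. \<exists>m. \<forall>j\<ge>m. hh i j \<in> D i"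
    proof
      fix i assume i: "i \<in> {1..k}"
      then have vi: "enat i < \<Lambda>" "i \<noteq> 0" using val by auto
      note g = \<gamma>[OF vi]
      have "D i \<noteq> {}" using assms(3) vi D i by auto
      then obtain G' where G': "G' \<in> \<gamma> i" "G' \<subseteq> D i" using g conjunct1[OF D[of i]] i \<open>D i \<noteq> {}\<close> unfolding refines_def by force
      obtain m where m: "G i m = G'" using from_nat_into_surj[OF conjunct1[OF g] G'(1)] unfolding G_def by blast
      have "hh i j \<in> D i" if "m \<le> j" for j
      proof -
        have "hh i j \<in> \<Inter> (G i ` {..j})" using hh(2)[of i j] vi unfolding H_def by simp
        then have "hh i j \<in> G i m" using that by auto
        then show ?thesis using m G' by blast
      qed
      then show "\<exists>m. \<forall>j\<ge>m. hh i j \<in> D i" by blast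
    qed
    from bchoice[OF this] obtain m where m0: "\<forall>i\<in>{1..k}. \<forall>j\<ge>m i. hh i j \<in> D i" by blast
    have m: "\<And>i j. i \<in> {1..k} \<Longrightarrow> m i \<le> j \<Longrightarrow> hh i j \<in> D i" using m0 by blast
    define N where "N = k + (\<Sum>i\<in>{1..k}. m i)"
    have mN: "m i \<le> N" if "i \<in> {1..k}" for i
      unfolding N_def using member_le_sum[of i "{1..k}" m] that by simp
    have sub: "v ` (D 0 - {..<N}) \<subseteq> (\<Inter>i\<le>k. A i)"
    proof
      fix y assume "y \<in> v ` (D 0 - {..<N})"
      then obtain j where j0: "j \<in> D 0 - {..<N}" "y = v j" by blast
      then have j: "j \<in> D 0" "N \<le> j" "y = v j" by auto
      show "y \<in> (\<Inter>i\<le>k. A i)"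
      proof
        fix i assume "i \<in> {..k}"
        then have ik: "i \<le> k" by simp
        show "y \<in> A i"
        proof (cases "i = 0")
          case True then show ?thesis using D[OF ik] j by (simp add: \<alpha>_def)
        next
          case False
          then have "i \<in> {1..k}" using ik by simp
          then have "hh i j \<in> D i" using m mN j(2) le_trans by blast
          moreover have "i \<le> j" using ik j(2) unfolding N_def by simp
          ultimately have "v j \<in> \<alpha> i ` D i" using aval[OF False] by (metis image_eqI)
          then show ?thesis using D[OF ik] j(3) by simp
        qed
      qed
    qed
    have "enat 0 < \<Lambda>" using val by simp
    have "infinite (\<Inter>{D 0})"
      by (rule fip_inf[OF assms(5) assms(4)[OF \<open>enat 0 < \<Lambda>\<close>]]) (use D[of 0] in auto)
    then have "infinite (D 0 - {..<N})" by simp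
    then have "infinite (v ` (D 0 - {..<N}))"
      using finite_imageD[OF _ inj_on_subset[OF strict_mono_imp_inj_on[OF vmono]]] by blast
    then show "infinite (\<Inter>i\<le>k. A i)" using sub finite_subset by blast
  qed
qed

end
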